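(* Let $R=[0,1]^2$, $s\in\mathbb{N}$, $u=2^{-s}$, and let $(B_1,B_2)$ be a good box pair. If $\ell,\ell'\in\mathcal{L}$ are two lines traversing $(B_1,B_2)$, then $|\hat{\ell}-\hat{\ell'}|\le4\sqrt u$. In particular, $W=O(\sqrt u)$, where $W$ is the supremum of $|\hat{\ell_c}-\hat{\ell}|$ over all $\ell\in\mathcal{L}$ traversing $(B_1,B_2)$ and $\ell_c$ is the line through $c_1$ and $c_2$.
   Context: For $p,q\in\mathbb{R}^2$ write $p\le q$ if both coordinates satisfy $\le$. $R$ is split into $2^s\times2^s$ congruent closed squares ("boxes") of side length $u$. A box pair is an ordered pair $(B_1,B_2)$ of boxes with centers $c_1,c_2$. Let $\mathcal{L}$ be the set of non-vertical lines in $\mathbb{R}^2$ with positive slope; each has a unit direction vector $a=(a_1,a_2)$ with positive coordinates, and its weight is $\hat{\ell}:=\min\{a_1,a_2\}$. A line $\ell\in\mathcal{L}$ traverses $(B_1,B_2)$ if it meets both boxes. A box pair is null if $c_1\not\le c_2$; close if $c_1\le c_2$ and $\|c_1-c_2\|_2<\sqrt u$; non-diagonal if $c_1\le c_2$, $\|c_1-c_2\|_2\ge\sqrt u$, and every traversing $\ell\in\mathcal{L}$ satisfies $\hat{\ell}<u^{1/5}$; good if it is neither null, close, nor non-diagonal. $O(\sqrt u)$ means bounded by an absolute constant times $\sqrt u$, uniformly over $s$ and good box pairs. *)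

theory Defs
  imports "HOL-Analysis.Analysis"
begin

type_synonym pt = "real \<times> real"

definition cle :: "pt \<Rightarrow> pt \<Rightarrow> bool" where
  "cle p q \<longleftrightarrow> fst p \<le> fst q \<and> snd p \<le> snd q"

definition side :: "nat \<Rightarrow> real" where
  "side s = 1 / 2 ^ s"

text \<open>Box with index (i,j), 0 <= i,j < 2^s, of the grid subdividing R = [0,1]^2.\<close>
definition valid_idx :: "nat \<Rightarrow> nat \<times> nat \<Rightarrow> bool" where
  "valid_idx s b \<longleftrightarrow> fst b < 2 ^ s \<and> snd b < 2 ^ s"

definition box_of :: "nat \<Rightarrow> nat \<times> nat \<Rightarrow> pt set" where
  "box_of s b = {x. real (fst b) * side s \<le> fst x \<and> fst x \<le> (real (fst b) + 1) * side s
                  \<and> real (snd b) * side s \<le> snd x \<and> snd x \<le> (real (snd b) + 1) * side s}"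

definition center :: "nat \<Rightarrow> nat \<times> nat \<Rightarrow> pt" where
  "center s b = ((real (fst b) + 1/2) * side s, (real (snd b) + 1/2) * side s)"

definition line_through :: "pt \<Rightarrow> pt \<Rightarrow> pt set" where
  "line_through p a = {p + t *\<^sub>R a | t. True}"

definition pos_unit :: "pt \<Rightarrow> bool" where
  "pos_unit a \<longleftrightarrow> fst a > 0 \<and> snd a > 0 \<and> norm a = 1"

definition Lines :: "pt set set" where
  "Lines = {line_through p a | p a. pos_unit a}"

text \<open>Weight of a line in L: min of the coordinates of its (unique) positive unit direction.\<close>
definition weight :: "pt set \<Rightarrow> real" where
  "weight l = (THE w. \<exists>p a. l = line_through p a \<and> pos_unit a \<and> w = min (fst a) (snd a))"

definition traverses :: "pt set \<Rightarrow> pt set \<Rightarrow> pt set \<Rightarrow> bool" where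
  "traverses l B1 B2 \<longleftrightarrow> l \<inter> B1 \<noteq> {} \<and> l \<inter> B2 \<noteq> {}"

text \<open>Good box pair: not null, not close, not non-diagonal.\<close>
definition good_pair :: "nat \<Rightarrow> nat \<times> nat \<Rightarrow> nat \<times> nat \<Rightarrow> bool" where
  "good_pair s b1 b2 \<longleftrightarrow> valid_idx s b1 \<and> valid_idx s b2
     \<and> cle (center s b1) (center s b2)
     \<and> dist (center s b1) (center s b2) \<ge> sqrt (side s)
     \<and> \<not> (\<forall>l\<in>Lines. traverses l (box_of s b1) (box_of s b2) \<longrightarrow> weight l < side s powr (1/5))"

definition center_weight :: "nat \<Rightarrow> nat \<times> nat \<Rightarrow> nat \<times> nat \<Rightarrow> real" where
  "center_weight s b1 b2 =
     (let d = center s b2 - center s b1 in min (fst d) (snd d) / norm d)"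

definition Wsup :: "nat \<Rightarrow> nat \<times> nat \<Rightarrow> nat \<times> nat \<Rightarrow> real" where
  "Wsup s b1 b2 = Sup {\<bar>center_weight s b1 b2 - weight l\<bar> | l.
        l \<in> Lines \<and> traverses l (box_of s b1) (box_of s b2)}"

end

theory Submission
  imports Defs
begin

lemma key:
  fixes a1 a2 d1 d2 t e1 e2 u :: real
  assumes a: "a1 > 0" "a2 > 0" "a1^2 + a2^2 = 1" and d: "d1 \<ge> 0" "d2 \<ge> 0"
    and D: "d1^2 + d2^2 \<ge> u" and u: "u > 0"
    and t: "d1 + e1 = t*a1" "d2 + e2 = t*a2" and e: "\<bar>e1\<bar> \<le> u" "\<bar>e2\<bar> \<le> u"
  shows "(a1 - d1 / sqrt (d1^2+d2^2))^2 + (a2 - d2 / sqrt (d1^2+d2^2))^2 \<le> 4*u"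
proof -
  define D where "D = d1^2+d2^2"
  define N where "N = sqrt D"
  define k where "k = a1*d1 + a2*d2"
  have Dpos: "D > 0" using D u D_def by linarith
  have N2: "N^2 = D" using Dpos N_def by simp
  have Npos: "N > 0" using Dpos N_def by simp
  have k0: "k \<ge> 0" using a d k_def by simp
  have e2: "e1^2 + e2^2 \<le> 2*u^2"
  proof -
    have "e1^2 \<le> u^2" using e(1) by (metis abs_le_square_iff abs_of_pos u)
    moreover have "e2^2 \<le> u^2" using e(2) by (metis abs_le_square_iff abs_of_pos u)
    ultimately show ?thesis by simp
  qed
  have ex: "(d1 - t*a1)^2 + (d2 - t*a2)^2 = e1^2 + e2^2"
    using t by (smt (verit) power2_minus)
  have "(d1 - t*a1)^2 + (d2 - t*a2)^2 = D - 2*t*k + t^2*(a1^2+a2^2)"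
    unfolding D_def k_def by (simp add: power2_eq_square algebra_simps)
  also have "\<dots> = (t - k)^2 + D - k^2" using a(3) by (simp add: power2_eq_square algebra_simps)
  finally have "D - k^2 \<le> 2*u^2" using ex e2 by (smt (verit) zero_le_power2)
  have CS: "k^2 \<le> D"
  proof -
    have "D - k^2 = (a1*d2 - a2*d1)^2 + (1 - (a1^2+a2^2))*D"
      unfolding D_def k_def by (simp add: power2_eq_square algebra_simps)
    then have "D - k^2 = (a1*d2 - a2*d1)^2" using a(3) by simp
    moreover have "(a1*d2 - a2*d1)^2 \<ge> 0" by simp
    ultimately show ?thesis by linarith
  qed
  have kN: "k \<le> N" using CS N2 Npos k0 by (metis abs_of_nonneg abs_le_square_iff abs_of_pos)
  have "(a1 - d1/N)^2 + (a2 - d2/N)^2 = (a1^2+a2^2) - 2*k/N + D/N^2"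
    unfolding D_def k_def using Npos by (simp add: power2_eq_square field_simps)
  also have "\<dots> = 2 - 2*k/N" using a(3) N2 Dpos by simp
  also have "\<dots> \<le> 2 - 2*k^2/D"
  proof -
    have "k^2/D = (k/N)*(k/N)" using N2 by (simp add: power2_eq_square)
    also have "\<dots> \<le> k/N" 
    proof (rule mult_left_le)
      show "k/N \<le> 1" using kN Npos by simp
      show "0 \<le> k/N" using k0 Npos by simp
    qed
    finally show ?thesis by simp
  qed
  also have "\<dots> = 2*(D - k^2)/D" using Dpos by (simp add: field_simps)
  also have "\<dots> \<le> 2*(2*u^2)/D" using \<open>D - k^2 \<le> 2*u^2\<close> Dpos by (simp add: divide_right_mono)
  also have "\<dots> \<le> 4*u"
  proof -
    have "u*u \<le> u*D" using D D_def u by (intro mult_left_mono) auto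
    then show ?thesis using Dpos by (simp add: pos_divide_le_eq power2_eq_square)
  qed
  finally show ?thesis unfolding N_def D_def .
qed

lemma pos_unit_sq: "pos_unit a \<Longrightarrow> (fst a)^2 + (snd a)^2 = 1"
  unfolding pos_unit_def by (cases a) (simp add: norm_Pair)

lemma line_dir_unique:
  assumes "line_through p a = line_through q b" "pos_unit a" "pos_unit b"
  shows "a = b"
proof -
  have "p \<in> line_through p a" unfolding line_through_def by (auto intro: exI[of _ 0])
  then have "p \<in> line_through q b" using assms(1) by simp
  then obtain t1 where t1: "p = q + t1 *\<^sub>R b" unfolding line_through_def by auto
  have "p + a \<in> line_through p a" unfolding line_through_def by (auto intro: exI[of _ 1])
  then have "p + a \<in> line_through q b" using assms(1) by simp
  then obtain t2 where t2: "p + a = q + t2 *\<^sub>R b" unfolding line_through_def by auto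
  have ab: "a = (t2 - t1) *\<^sub>R b" using t1 t2 by (simp add: algebra_simps)
  have "fst a = (t2 - t1) * fst b" using ab by simp
  then have c: "t2 - t1 > 0" using assms(2,3) unfolding pos_unit_def
    by (metis zero_less_mult_pos2 )
  have "norm a = \<bar>t2 - t1\<bar> * norm b" using ab by simp
  then have "t2 - t1 = 1" using assms(2,3) c unfolding pos_unit_def by simp
  then show ?thesis using ab by simp
qed

lemma weight_eq: "pos_unit a \<Longrightarrow> weight (line_through p a) = min (fst a) (snd a)"
  unfolding weight_def
  apply (rule the_equality)
   apply blast
  using line_dir_unique by blast

lemma in_box:
  assumes "x \<in> box_of s b"
  shows "\<bar>fst x - fst (center s b)\<bar> \<le> side s / 2" "\<bar>snd x - snd (center s b)\<bar> \<le> side s / 2"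
  using assms unfolding box_of_def center_def by (auto simp: algebra_simps split: abs_split)

lemma side_pos: "side s > 0" unfolding side_def by simp

lemma sq_bound: "(x::real)^2 \<le> 4*u \<Longrightarrow> \<bar>x\<bar> \<le> 2 * sqrt u"
proof -
  assume h: "x^2 \<le> 4*u"
  have "sqrt (x^2) \<le> sqrt (4*u)" using h by (rule real_sqrt_le_mono)
  then show ?thesis by (simp add: real_sqrt_mult)
qed

lemma main_bound:
  assumes g: "good_pair s b1 b2" and l: "l \<in> Lines"
    and tr: "traverses l (box_of s b1) (box_of s b2)"
  defines "d1 \<equiv> fst (center s b2) - fst (center s b1)"
    and "d2 \<equiv> snd (center s b2) - snd (center s b1)"
  shows "\<exists>a. pos_unit a \<and> weight l = min (fst a) (snd a)
     \<and> \<bar>fst a - d1 / sqrt (d1^2+d2^2)\<bar> \<le> 2 * sqrt (side s)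
     \<and> \<bar>snd a - d2 / sqrt (d1^2+d2^2)\<bar> \<le> 2 * sqrt (side s)"
proof -
  let ?u = "side s"
  obtain p a where la: "l = line_through p a" and pa: "pos_unit a" using l unfolding Lines_def by auto
  have w: "weight l = min (fst a) (snd a)" using la pa weight_eq by simp
  obtain x1 where x1: "x1 \<in> l" "x1 \<in> box_of s b1" using tr unfolding traverses_def by auto
  obtain x2 where x2: "x2 \<in> l" "x2 \<in> box_of s b2" using tr unfolding traverses_def by auto
  obtain t1 where t1: "x1 = p + t1 *\<^sub>R a" using x1(1) la unfolding line_through_def by auto
  obtain t2 where t2: "x2 = p + t2 *\<^sub>R a" using x2(1) la unfolding line_through_def by auto
  define e1 where "e1 = (fst x2 - fst (center s b2)) - (fst x1 - fst (center s b1))"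
  define e2 where "e2 = (snd x2 - snd (center s b2)) - (snd x1 - snd (center s b1))"
  have eq1: "d1 + e1 = (t2 - t1) * fst a" unfolding d1_def e1_def using t1 t2 by (simp add: algebra_simps)
  have eq2: "d2 + e2 = (t2 - t1) * snd a" unfolding d2_def e2_def using t1 t2 by (simp add: algebra_simps)
  have be1: "\<bar>e1\<bar> \<le> ?u" unfolding e1_def using in_box(1)[OF x1(2)] in_box(1)[OF x2(2)] by linarith
  have be2: "\<bar>e2\<bar> \<le> ?u" unfolding e2_def using in_box(2)[OF x1(2)] in_box(2)[OF x2(2)] by linarith
  have cl: "cle (center s b1) (center s b2)" and dd: "dist (center s b1) (center s b2) \<ge> sqrt ?u"
    using g unfolding good_pair_def by auto
  have d0: "d1 \<ge> 0" "d2 \<ge> 0" using cl unfolding cle_def d1_def d2_def by auto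
  have "dist (center s b1) (center s b2) = sqrt (d1^2 + d2^2)"
    unfolding dist_prod_def d1_def d2_def dist_real_def by (simp add: power2_commute)
  then have D: "d1^2 + d2^2 \<ge> ?u" using dd by simp
  have K: "(fst a - d1 / sqrt (d1^2+d2^2))^2 + (snd a - d2 / sqrt (d1^2+d2^2))^2 \<le> 4 * ?u"
    using pa pos_unit_sq[OF pa] unfolding pos_unit_def
    by (intro key[OF _ _ _ d0 D side_pos eq1 eq2 be1 be2]) auto
  have "(fst a - d1 / sqrt (d1^2+d2^2))^2 \<le> 4 * ?u" using K by (smt (verit) zero_le_power2)
  moreover have "(snd a - d2 / sqrt (d1^2+d2^2))^2 \<le> 4 * ?u" using K by (smt (verit) zero_le_power2)
  ultimately show ?thesis using pa w sq_bound by blast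
qed

lemma min_diff: "\<bar>(x1::real) - y1\<bar> \<le> M \<Longrightarrow> \<bar>x2 - y2\<bar> \<le> M \<Longrightarrow> \<bar>min x1 x2 - min y1 y2\<bar> \<le> M"
  by (auto simp: min_def abs_le_iff)

theorem lemma8:
  shows "(\<forall>s b1 b2 l l'. good_pair s b1 b2 \<longrightarrow> l \<in> Lines \<longrightarrow> l' \<in> Lines
            \<longrightarrow> traverses l (box_of s b1) (box_of s b2)
            \<longrightarrow> traverses l' (box_of s b1) (box_of s b2)
            \<longrightarrow> \<bar>weight l - weight l'\<bar> \<le> 4 * sqrt (side s))
       \<and> (\<exists>C. \<forall>s b1 b2. good_pair s b1 b2 \<longrightarrow> Wsup s b1 b2 \<le> C * sqrt (side s))"
proof (intro conjI allI impI)
  fix s b1 b2 l l'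
  assume g: "good_pair s b1 b2" and l: "l \<in> Lines" "l' \<in> Lines"
    and tr: "traverses l (box_of s b1) (box_of s b2)" "traverses l' (box_of s b1) (box_of s b2)"
  obtain a where a: "weight l = min (fst a) (snd a)"
     "\<bar>fst a - (fst (center s b2) - fst (center s b1)) / sqrt ((fst (center s b2) - fst (center s b1))^2+(snd (center s b2) - snd (center s b1))^2)\<bar> \<le> 2 * sqrt (side s)"
     "\<bar>snd a - (snd (center s b2) - snd (center s b1)) / sqrt ((fst (center s b2) - fst (center s b1))^2+(snd (center s b2) - snd (center s b1))^2)\<bar> \<le> 2 * sqrt (side s)"
    using main_bound[OF g l(1) tr(1)] by blast
  obtain a' where a': "weight l' = min (fst a') (snd a')"
     "\<bar>fst a' - (fst (center s b2) - fst (center s b1)) / sqrt ((fst (center s b2) - fst (center s b1))^2+(snd (center s b2) - snd (center s b1))^2)\<bar> \<le> 2 * sqrt (side s)"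
     "\<bar>snd a' - (snd (center s b2) - snd (center s b1)) / sqrt ((fst (center s b2) - fst (center s b1))^2+(snd (center s b2) - snd (center s b1))^2)\<bar> \<le> 2 * sqrt (side s)"
    using main_bound[OF g l(2) tr(2)] by blast
  have "\<bar>fst a - fst a'\<bar> \<le> 4 * sqrt (side s)" using a(2) a'(2) by linarith
  moreover have "\<bar>snd a - snd a'\<bar> \<le> 4 * sqrt (side s)" using a(3) a'(3) by linarith
  ultimately show "\<bar>weight l - weight l'\<bar> \<le> 4 * sqrt (side s)" using a(1) a'(1) min_diff by simp
next
  show "\<exists>C. \<forall>s b1 b2. good_pair s b1 b2 \<longrightarrow> Wsup s b1 b2 \<le> C * sqrt (side s)"
  proof (intro exI allI impI)
    fix s b1 b2
    assume g: "good_pair s b1 b2"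
    define d1 where "d1 = fst (center s b2) - fst (center s b1)"
    define d2 where "d2 = snd (center s b2) - snd (center s b1)"
    have cw: "center_weight s b1 b2 = min (d1 / sqrt (d1^2+d2^2)) (d2 / sqrt (d1^2+d2^2))"
    proof -
      have "norm (center s b2 - center s b1) = sqrt (d1^2+d2^2)"
        unfolding d1_def d2_def by (simp add: norm_prod_def)
      moreover have "sqrt (d1^2+d2^2) \<ge> 0" by simp
      ultimately show ?thesis unfolding center_weight_def Let_def d1_def[symmetric] d2_def[symmetric]
        by (simp add: min_divide_distrib_right d1_def d2_def)
    qed
    let ?S = "{\<bar>center_weight s b1 b2 - weight l\<bar> | l.
        l \<in> Lines \<and> traverses l (box_of s b1) (box_of s b2)}"
    have ne: "?S \<noteq> {}" using g unfolding good_pair_def by auto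
    have bd: "\<forall>x\<in>?S. x \<le> 2 * sqrt (side s)"
    proof
      fix x assume "x \<in> ?S"
      then obtain l where l: "x = \<bar>center_weight s b1 b2 - weight l\<bar>" "l \<in> Lines"
        "traverses l (box_of s b1) (box_of s b2)" by auto
      obtain a where a: "weight l = min (fst a) (snd a)"
        "\<bar>fst a - d1 / sqrt (d1^2+d2^2)\<bar> \<le> 2 * sqrt (side s)"
        "\<bar>snd a - d2 / sqrt (d1^2+d2^2)\<bar> \<le> 2 * sqrt (side s)"
        using main_bound[OF g l(2) l(3)] unfolding d1_def d2_def by blast
      have "\<bar>d1 / sqrt (d1^2+d2^2) - fst a\<bar> \<le> 2 * sqrt (side s)" using a(2) by linarith
      moreover have "\<bar>d2 / sqrt (d1^2+d2^2) - snd a\<bar> \<le> 2 * sqrt (side s)" using a(3) by linarith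
      ultimately show "x \<le> 2 * sqrt (side s)" using l(1) cw a(1) min_diff by simp
    qed
    show "Wsup s b1 b2 \<le> 2 * sqrt (side s)"
      unfolding Wsup_def using ne bd by (intro cSup_least) auto
  qed
qed

end
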